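(* Let $H$ be a real Hilbert space, let $D\subseteq H$ be a nonempty closed convex set, and let $T_1,\dots,T_m:D\to D$ be firmly nonexpansive operators with $F:=\bigcap_{i=1}^m\mathrm{Fix}(T_i)\neq\emptyset$. Fix $(\Omega,w)\in\mathcal{M}$, let $(\lambda_k)_{k\in\mathbb{N}}$ be a steering sequence, and let $u,x^0\in D$. Then the sequence defined by $$x^{k+1}=\lambda_k u+(1-\lambda_k)\sum_{t\in\Omega}w(t)T[t](x^k),\quad k\ge 0,$$ converges strongly to $P_F(u)$.
   Context: An operator $T:D\to H$ is firmly nonexpansive if $\|T(x)-T(y)\|^2\le\langle x-y,T(x)-T(y)\rangle$ for all $x,y\in D$. $\mathrm{Fix}(T)=\{x\in D: T(x)=x\}$; $P_F$ is the metric (nearest point) projection onto the closed convex set $F$. An index vector is a finite tuple $t=(t_1,\dots,t_q)$ with each $t_\ell\in\{1,\dots,m\}$; the string operator is $T[t]:=T_{t_q}T_{t_{q-1}}\cdots T_{t_1}$. A finite set $\Omega$ of index vectors is fit if every $i\in\{1,\dots,m\}$ appears as a component of some $t\in\Omega$. $\mathcal{M}$ denotes the collection of all pairs $(\Omega,w)$ where $\Omega$ is a fit finite set of index vectors and $w:\Omega\to(0,1]$ satisfies $\sum_{t\in\Omega}w(t)=1$. A steering sequence is a real sequence $(\lambda_k)_{k\in\mathbb{N}}$ with $\lambda_k\in[0,1]$ for all $k$, $\lim_{k\to\infty}\lambda_k=0$, $\sum_{k=0}^\infty\lambda_k=+\infty$, and $\sum_{k=0}^\infty|\lambda_{k+1}-\lambda_k|<\infty$.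 $\mathbb{N}$ includes $0$. *)

theory Defs
  imports "HOL-Analysis.Analysis"
begin

definition firmly_nonexpansive_on :: "'a::real_inner set \<Rightarrow> ('a \<Rightarrow> 'a) \<Rightarrow> bool" where
  "firmly_nonexpansive_on D T \<longleftrightarrow>
     (\<forall>x\<in>D. \<forall>y\<in>D. (norm (T x - T y))\<^sup>2 \<le> inner (x - y) (T x - T y))"

definition Fix_on :: "'a set \<Rightarrow> ('a \<Rightarrow> 'a) \<Rightarrow> 'a set" where
  "Fix_on D T = {x \<in> D. T x = x}"

text \<open>Metric (nearest point) projection onto a set F (well defined and unique for
  nonempty closed convex F in a Hilbert space).\<close>
definition metric_proj :: "'a::real_inner set \<Rightarrow> 'a \<Rightarrow> 'a" where
  "metric_proj F u = (SOME p. p \<in> F \<and> (\<forall>y\<in>F. dist u p \<le> dist u y))"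

text \<open>String operator T[t] = T_{t_q} o ... o T_{t_1} for t = [t_1,...,t_q].\<close>
definition string_op :: "(nat \<Rightarrow> 'a \<Rightarrow> 'a) \<Rightarrow> nat list \<Rightarrow> 'a \<Rightarrow> 'a" where
  "string_op T t x = fold (\<lambda>i y. T i y) t x"

definition index_vector :: "nat \<Rightarrow> nat list \<Rightarrow> bool" where
  "index_vector m t \<longleftrightarrow> t \<noteq> [] \<and> set t \<subseteq> {1..m}"

definition fit :: "nat \<Rightarrow> nat list set \<Rightarrow> bool" where
  "fit m \<Omega> \<longleftrightarrow> finite \<Omega> \<and> (\<forall>t\<in>\<Omega>. index_vector m t) \<and>
     (\<forall>i\<in>{1..m}. \<exists>t\<in>\<Omega>. i \<in> set t)"

definition in_M :: "nat \<Rightarrow> nat list set \<Rightarrow> (nat list \<Rightarrow> real) \<Rightarrow> bool" where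
  "in_M m \<Omega> w \<longleftrightarrow> fit m \<Omega> \<and> (\<forall>t\<in>\<Omega>. 0 < w t \<and> w t \<le> 1) \<and> (\<Sum>t\<in>\<Omega>. w t) = 1"

definition steering_sequence :: "(nat \<Rightarrow> real) \<Rightarrow> bool" where
  "steering_sequence lam \<longleftrightarrow> (\<forall>k. 0 \<le> lam k \<and> lam k \<le> 1) \<and> lam \<longlonglongrightarrow> 0 \<and>
     \<not> summable lam \<and> summable (\<lambda>k. \<bar>lam (Suc k) - lam k\<bar>)"

end

theory Submission
  imports Defs "HOL-Analysis.Analysis"
begin

lemma nonsum_big:
  fixes g :: "nat \<Rightarrow> real"
  assumes "\<And>n. 0 \<le> g n" "\<not> summable g"
  shows "\<exists>J. sum g {N..<N+J} \<ge> B"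
proof -
  have "\<not> (\<forall>n. sum g {..<n} \<le> \<bar>B\<bar> + sum g {..<N})"
    using summableI_nonneg_bounded[of g "\<bar>B\<bar> + sum g {..<N}"] assms by blast
  then have "\<exists>n. sum g {..<n} > \<bar>B\<bar> + sum g {..<N}"
    by (simp add: not_le)
  then obtain n where n: "sum g {..<n} > \<bar>B\<bar> + sum g {..<N}" by blast
  have "N \<le> n"
  proof (rule ccontr)
    assume "\<not> N \<le> n"
    then have "sum g {..<n} \<le> sum g {..<N}"
      by (intro sum_mono2) (auto simp: assms)
    with n show False by simp
  qed
  have "sum g {..<n} = sum g {..<N} + sum g {N..<n}"
    using \<open>N \<le> n\<close> by (metis atLeast0LessThan sum.atLeastLessThan_concat zero_le)
  then have "sum g {N..<N+(n-N)} \<ge> B" using n \<open>N \<le> n\<close> by simp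
  then show ?thesis by blast
qed

lemma xu_lemma:
  fixes a \<gamma> b c :: "nat \<Rightarrow> real"
  assumes a0: "\<And>n. 0 \<le> a n" and g01: "\<And>n. 0 \<le> \<gamma> n \<and> \<gamma> n \<le> 1"
    and gs: "\<not> summable \<gamma>" and c0: "\<And>n. 0 \<le> c n" and cs: "summable c"
    and bev: "\<And>e. e > 0 \<Longrightarrow> eventually (\<lambda>n. b n \<le> e) sequentially"
    and rec: "\<And>n. a (Suc n) \<le> (1 - \<gamma> n) * a n + \<gamma> n * b n + c n"
  shows "a \<longlonglongrightarrow> 0"
proof (rule LIMSEQ_I)
  fix r :: real assume "r > 0"
  define e where "e = r / 3"
  have e: "e > 0" using \<open>r > 0\<close> by (simp add: e_def)
  obtain N1 where N1: "\<And>n. n \<ge> N1 \<Longrightarrow> b n \<le> e"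
    using bev[OF e] by (auto simp: eventually_sequentially)
  obtain N2 where N2: "\<And>m n. m \<ge> N2 \<Longrightarrow> norm (sum c {m..<n}) < e"
    using cs e unfolding summable_Cauchy by blast
  define N where "N = max N1 N2"
  define d where "d n = max (a n - e) 0" for n
  have drec: "d (Suc n) \<le> (1 - \<gamma> n) * d n + c n" if "n \<ge> N" for n
  proof -
    have bn: "b n \<le> e" using N1 that by (simp add: N_def)
    have "\<gamma> n * b n \<le> \<gamma> n * e" using bn g01[of n] by (simp add: mult_left_mono)
    then have "a (Suc n) - e \<le> (1 - \<gamma> n) * (a n - e) + c n"
      using rec[of n] by (simp add: algebra_simps)
    also have "\<dots> \<le> (1 - \<gamma> n) * d n + c n"
      using g01[of n] by (intro add_right_mono mult_left_mono) (auto simp: d_def)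
    finally have 1: "a (Suc n) - e \<le> (1 - \<gamma> n) * d n + c n" .
    have "0 \<le> (1 - \<gamma> n) * d n + c n" using g01[of n] c0[of n]
      by (simp add: d_def)
    with 1 show ?thesis by (simp add: d_def)
  qed
  define P where "P j = (\<Prod>k\<in>{N..<N+j}. 1 - \<gamma> k)" for j
  have dbound: "d (N + j) \<le> P j * d N + sum c {N..<N+j}" for j
  proof (induction j)
    case 0 then show ?case by (simp add: P_def)
  next
    case (Suc j)
    have P0: "0 \<le> P j" unfolding P_def using g01 by (intro prod_nonneg) auto
    have "d (N + Suc j) \<le> (1 - \<gamma> (N+j)) * d (N+j) + c (N+j)"
      using drec[of "N+j"] by simp
    also have "\<dots> \<le> (1 - \<gamma> (N+j)) * (P j * d N + sum c {N..<N+j}) + c (N+j)"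
      using Suc g01[of "N+j"] by (intro add_right_mono mult_left_mono) auto
    also have "\<dots> = P (Suc j) * d N + (1 - \<gamma> (N+j)) * sum c {N..<N+j} + c (N+j)"
      by (simp add: P_def algebra_simps)
    also have "\<dots> \<le> P (Suc j) * d N + sum c {N..<N+j} + c (N+j)"
    proof -
      have "(1 - \<gamma> (N+j)) * sum c {N..<N+j} \<le> sum c {N..<N+j}"
        using g01[of "N+j"] c0 sum_nonneg[of "{N..<N+j}" c]
        by (simp add: mult_left_le_one_le)
      then show ?thesis by simp
    qed
    also have "\<dots> = P (Suc j) * d N + sum c {N..<N + Suc j}" by simp
    finally show ?case .
  qed
  have Pexp: "P j \<le> exp (- sum \<gamma> {N..<N+j})" for j
  proof -
    have "P j \<le> (\<Prod>k\<in>{N..<N+j}. exp (- \<gamma> k))"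
      unfolding P_def using g01
    proof (intro prod_mono conjI)
      fix k assume "k \<in> {N..<N+j}"
      show "0 \<le> 1 - \<gamma> k" using g01[of k] by simp
      show "1 - \<gamma> k \<le> exp (- \<gamma> k)" using exp_ge_add_one_self[of "- \<gamma> k"] by simp
    qed
    also have "\<dots> = exp (- sum \<gamma> {N..<N+j})"
      by (simp add: exp_sum sum_negf[symmetric])
    finally show ?thesis .
  qed
  have dN0: "0 \<le> d N" by (simp add: d_def)
  obtain B where B: "B > 0" "exp (- B) * d N < e"
  proof -
    have ex: "((\<lambda>x. exp (- x)) \<longlongrightarrow> (0::real)) at_top"
      using filterlim_compose[OF exp_at_bot filterlim_uminus_at_bot_at_top] by simp
    have "((\<lambda>B. exp (- B) * d N) \<longlongrightarrow> 0 * d N) at_top"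
      by (intro tendsto_intros ex)
    then have "eventually (\<lambda>B. exp (- B) * d N < e) at_top"
      using e by (simp add: order_tendstoD(2))
    then obtain B0 where "\<And>B. B \<ge> B0 \<Longrightarrow> exp (- B) * d N < e"
      by (auto simp: eventually_at_top_linorder)
    then show ?thesis using that[of "max B0 1"] by simp
  qed
  obtain J where J: "sum \<gamma> {N..<N+J} \<ge> B" using nonsum_big[OF _ gs] g01 by blast
  show "\<exists>no. \<forall>n\<ge>no. norm (a n - 0) < r"
  proof (intro exI allI impI)
    fix n assume n: "n \<ge> N + J"
    then obtain j where j: "n = N + j" "j \<ge> J" using le_Suc_ex by force
    have "sum \<gamma> {N..<N+J} \<le> sum \<gamma> {N..<N+j}"
      using j g01 by (intro sum_mono2) auto
    then have "exp (- sum \<gamma> {N..<N+j}) \<le> exp (- B)" using J by simp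
    then have "P j * d N \<le> exp (- B) * d N"
      using Pexp[of j] dN0 by (intro mult_right_mono) (auto intro: order_trans)
    moreover have "sum c {N..<N+j} < e" using N2[of N "N+j"] c0 sum_nonneg[of "{N..<N+j}" c]
      by (simp add: N_def)
    ultimately have "d n < e + e" using dbound[of j] B j(1) by simp
    then have "a n < 3 * e" by (simp add: d_def)
    then show "norm (a n - 0) < r" using a0[of n] by (simp add: e_def)
  qed
qed


lemma sq_add: "(norm (a + b))\<^sup>2 = (norm a)\<^sup>2 + 2 * inner a b + (norm (b::'a::real_inner))\<^sup>2"
  by (simp add: power2_norm_eq_inner inner_add inner_commute algebra_simps)

lemma sq_diff: "(norm (a - b))\<^sup>2 = (norm a)\<^sup>2 - 2 * inner a b + (norm (b::'a::real_inner))\<^sup>2"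
  by (simp add: power2_norm_eq_inner inner_diff inner_commute algebra_simps)

lemma ne_mono:
  fixes S :: "'a::real_inner \<Rightarrow> 'a"
  assumes ne: "norm (S a - S b) \<le> norm (a - b)"
  shows "inner ((a - S a) - (b - S b)) (a - b) \<ge> 0"
proof -
  have "inner ((a - S a) - (b - S b)) (a - b) = (norm (a - b))\<^sup>2 - inner (S a - S b) (a - b)"
    by (simp add: power2_norm_eq_inner inner_diff inner_commute algebra_simps)
  moreover have "inner (S a - S b) (a - b) \<le> norm (S a - S b) * norm (a - b)"
    by (rule norm_cauchy_schwarz)
  moreover have "norm (S a - S b) * norm (a - b) \<le> norm (a - b) * norm (a - b)"
    using ne by (simp add: mult_right_mono)
  ultimately show ?thesis by (simp add: power2_eq_square)
qed

lemma tikh_point: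
  fixes D :: "'a::{real_inner,complete_space} set" and S :: "'a \<Rightarrow> 'a"
  assumes D: "closed D" "convex D" "D \<noteq> {}" and SD: "S ` D \<subseteq> D"
    and ne: "\<And>a b. a \<in> D \<Longrightarrow> b \<in> D \<Longrightarrow> norm (S a - S b) \<le> norm (a - b)"
    and u: "u \<in> D" and e: "e > 0"
  shows "\<exists>z\<in>D. z - S z = - e *\<^sub>R (z - u)"
proof -
  define f where "f z = (1/(1+e)) *\<^sub>R S z + (e/(1+e)) *\<^sub>R u" for z
  have fD: "f ` D \<subseteq> D"
  proof
    fix y assume "y \<in> f ` D"
    then obtain z where z: "z \<in> D" "y = f z" by blast
    have "S z \<in> D" using SD z by blast
    then show "y \<in> D" unfolding z f_def
      using convexD[OF D(2) \<open>S z \<in> D\<close> u, of "1/(1+e)" "e/(1+e)"] e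
      by (simp add: add_divide_distrib[symmetric])
  qed
  have lip: "dist (f a) (f b) \<le> (1/(1+e)) * dist a b" if "a \<in> D" "b \<in> D" for a b
  proof -
    have "f a - f b = (1/(1+e)) *\<^sub>R (S a - S b)"
      by (simp add: f_def algebra_simps)
    then have "dist (f a) (f b) = (1/(1+e)) * norm (S a - S b)"
      using e by (simp add: dist_norm)
    also have "\<dots> \<le> (1/(1+e)) * norm (a - b)"
      using ne[OF that] e by (simp add: divide_right_mono)
    finally show ?thesis by (simp add: dist_norm)
  qed
  have "complete D" using D(1) by (simp add: complete_eq_closed)
  then obtain z where z: "z \<in> D" "f z = z"
    using Banach_fix[OF _ D(3) _ _ fD lip] e by auto
  have "(1+e) *\<^sub>R z = (1+e) *\<^sub>R f z" using z by simp
  also have "\<dots> = S z + e *\<^sub>R u" using e by (simp add: f_def scaleR_add_right)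
  finally have "z + e *\<^sub>R z = S z + e *\<^sub>R u" by (simp add: scaleR_add_left)
  then have "z - S z = - e *\<^sub>R (z - u)" by (simp add: algebra_simps)
  then show ?thesis using z by blast
qed

lemma proj_char:
  fixes F :: "'a::real_inner set"
  assumes p: "p \<in> F" and ip: "\<And>q. q \<in> F \<Longrightarrow> inner (p - u) (p - q) \<le> 0"
  shows "metric_proj F u = p"
proof -
  have key: "(norm (y - u))\<^sup>2 \<ge> (norm (y - p))\<^sup>2 + (norm (p - u))\<^sup>2" if "y \<in> F" for y
  proof -
    have "y - u = (y - p) + (p - u)" by simp
    then have "(norm (y - u))\<^sup>2 = (norm (y - p))\<^sup>2 + 2 * inner (y - p) (p - u) + (norm (p - u))\<^sup>2"
      using sq_add by metis
    moreover have "inner (y - p) (p - u) = - inner (p - u) (p - y)"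
      by (simp add: inner_diff inner_commute algebra_simps)
    ultimately show ?thesis using ip[OF that] by simp
  qed
  have P: "p \<in> F \<and> (\<forall>y\<in>F. dist u p \<le> dist u y)"
  proof (intro conjI ballI p)
    fix y assume "y \<in> F"
    then have "(norm (p - u))\<^sup>2 \<le> (norm (y - u))\<^sup>2" using key by (smt (verit) zero_le_power2)
    then have "norm (p - u) \<le> norm (y - u)" using power2_le_imp_le by fastforce
    then show "dist u p \<le> dist u y" by (simp add: dist_norm norm_minus_commute)
  qed
  show ?thesis unfolding metric_proj_def
  proof (rule someI2[of _ p], rule P)
    fix p' assume p': "p' \<in> F \<and> (\<forall>y\<in>F. dist u p' \<le> dist u y)"
    then have "norm (p' - u) \<le> norm (p - u)" using p by (auto simp: dist_norm norm_minus_commute)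
    then have sq: "(norm (p' - u))\<^sup>2 \<le> (norm (p - u))\<^sup>2" by (simp add: power_mono)
    have "(norm (p' - p))\<^sup>2 \<le> 0" using key[of p'] p' sq by linarith
    then show "p' = p" by simp
  qed
qed


lemma real_aux:
  fixes c d I A B :: real
  assumes "0 < d" "d < c" "c * A + d * B \<le> (c + d) * I" "2 * I \<le> A + B"
  shows "A \<le> I"
proof -
  have "(c + d) * (2 * I) \<le> (c + d) * (A + B)" using assms by (intro mult_left_mono) auto
  moreover have "(c + d) * (2 * I) = 2 * ((c + d) * I)" by simp
  ultimately have "2 * (c * A + d * B) \<le> (c + d) * (A + B)" using assms(3) by (smt (verit))
  then have "0 \<le> (c - d) * (B - A)" by (simp add: algebra_simps)
  then have BA: "A \<le> B" using assms by (simp add: zero_le_mult_iff)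
  have "(c + d) * A \<le> c * A + d * B" using BA assms by (simp add: algebra_simps mult_left_mono)
  with assms(3) have "(c + d) * A \<le> (c + d) * I" by linarith
  then show ?thesis using assms by simp
qed

lemma tikh_path:
  fixes D :: "'a::{real_inner,complete_space} set" and S :: "'a \<Rightarrow> 'a"
  assumes D: "closed D" "convex D" and SD: "S ` D \<subseteq> D"
    and ne: "\<And>a b. a \<in> D \<Longrightarrow> b \<in> D \<Longrightarrow> norm (S a - S b) \<le> norm (a - b)"
    and u: "u \<in> D" and q0: "q0 \<in> D" "S q0 = q0"
  shows "\<exists>p\<in>D. S p = p \<and> (\<forall>q\<in>D. S q = q \<longrightarrow> inner (p - u) (p - q) \<le> 0) \<and>
     (\<forall>\<delta>>0. \<exists>e>0. \<exists>z\<in>D. z - S z = - e *\<^sub>R (z - u) \<and> norm (z - p) < \<delta>)"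
proof -
  define \<epsilon> where "\<epsilon> n = inverse (real (Suc n))" for n
  have \<epsilon>pos: "\<epsilon> n > 0" for n by (simp add: \<epsilon>_def)
  have "\<forall>n. \<exists>z\<in>D. z - S z = - \<epsilon> n *\<^sub>R (z - u)"
    using tikh_point[OF D _ SD ne u \<epsilon>pos] u by blast
  then obtain z where zD: "\<And>n. z n \<in> D" and zeq: "\<And>n. z n - S (z n) = - \<epsilon> n *\<^sub>R (z n - u)"
    by metis
  have zq: "inner (z n - u) (z n - q) \<le> 0" if "q \<in> D" "S q = q" for n q
  proof -
    have "0 \<le> inner ((z n - S (z n)) - (q - S q)) (z n - q)"
      by (rule ne_mono[of S, OF ne[OF zD that(1)]])
    also have "\<dots> = - \<epsilon> n * inner (z n - u) (z n - q)"
      using zeq[of n] that by simp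
    finally show ?thesis using \<epsilon>pos[of n] by (simp add: mult_le_0_iff)
  qed
  have zb: "norm (z n - u) \<le> norm (q0 - u)" for n
  proof -
    have "(norm (z n - u))\<^sup>2 = inner (z n - u) (z n - q0) + inner (z n - u) (q0 - u)"
      by (simp add: power2_norm_eq_inner inner_diff algebra_simps)
    also have "\<dots> \<le> norm (z n - u) * norm (q0 - u)"
      using zq[of q0 n, OF q0] norm_cauchy_schwarz[of "z n - u" "q0 - u"] by linarith
    finally have "norm (z n - u) * norm (z n - u) \<le> norm (z n - u) * norm (q0 - u)"
      by (simp add: power2_eq_square)
    then show ?thesis
      by (cases "norm (z n - u) = 0") (auto simp: mult_le_cancel_left)
  qed
  define r where "r n = (norm (z n - u))\<^sup>2" for n
  have cross: "(norm (z n - z m))\<^sup>2 \<le> r n - r m" if "m \<le> n" for m n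
  proof (cases "m = n")
    case True then show ?thesis by simp
  next
    case False
    with that have mn: "m < n" by simp
    have epsl: "\<epsilon> n < \<epsilon> m" using mn by (simp add: \<epsilon>_def)
    define a where "a = z m - u"
    define b where "b = z n - u"
    have "0 \<le> inner ((z m - S (z m)) - (z n - S (z n))) (z m - z n)"
      by (rule ne_mono[of S, OF ne[OF zD[of m] zD[of n]]])
    also have "\<dots> = inner (- \<epsilon> m *\<^sub>R a + \<epsilon> n *\<^sub>R b) (a - b)"
      using zeq[of m] zeq[of n] by (simp add: a_def b_def)
    also have "\<dots> = - \<epsilon> m * (norm a)\<^sup>2 + (\<epsilon> m + \<epsilon> n) * inner a b - \<epsilon> n * (norm b)\<^sup>2"
      by (simp add: power2_norm_eq_inner inner_diff inner_add inner_commute algebra_simps)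
    finally have 1: "\<epsilon> m * (norm a)\<^sup>2 + \<epsilon> n * (norm b)\<^sup>2 \<le> (\<epsilon> m + \<epsilon> n) * inner a b" by linarith
    have 2: "2 * inner a b \<le> (norm a)\<^sup>2 + (norm b)\<^sup>2"
      using sq_diff[of a b] zero_le_power2[of "norm (a - b)"] by linarith
    have "(norm a)\<^sup>2 \<le> inner a b" by (rule real_aux[OF \<epsilon>pos epsl 1 2])
    moreover have "z n - z m = b - a" by (simp add: a_def b_def)
    ultimately show ?thesis using sq_diff[of b a]
      by (simp add: r_def a_def[symmetric] b_def[symmetric] inner_commute)
  qed
  have incr: "incseq r"
  proof (rule incseq_SucI)
    fix n show "r n \<le> r (Suc n)"
      using cross[of n "Suc n"] zero_le_power2[of "norm (z (Suc n) - z n)"] by linarith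
  qed
  have bnd: "\<forall>i. r i \<le> (norm (q0 - u))\<^sup>2"
    using zb by (simp add: r_def power_mono)
  obtain L where "r \<longlonglongrightarrow> L" using incseq_convergent[OF incr bnd] by blast
  then have rC: "Cauchy r" by (rule LIMSEQ_imp_Cauchy)
  have "Cauchy z"
  proof (rule CauchyI)
    fix e :: real assume e: "e > 0"
    then have e2: "e\<^sup>2 > 0" by simp
    obtain M where M: "\<forall>m\<ge>M. \<forall>n\<ge>M. norm (r m - r n) < e\<^sup>2"
      using CauchyD[OF rC e2] by blast
    have "norm (z m - z n) < e" if "m \<ge> M" "n \<ge> M" for m n
    proof -
      have Mmn: "r m - r n < e\<^sup>2" "r n - r m < e\<^sup>2"
        using M that by (auto simp: abs_less_iff)
      have "(norm (z m - z n))\<^sup>2 < e\<^sup>2"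
      proof (cases "n \<le> m")
        case True
        show ?thesis using cross[OF True] Mmn by linarith
      next
        case False
        then have "m \<le> n" by simp
        from cross[OF this] have "(norm (z m - z n))\<^sup>2 \<le> r n - r m"
          by (simp add: norm_minus_commute)
        then show ?thesis using Mmn by linarith
      qed
      from power2_less_imp_less[OF this] e show ?thesis by simp
    qed
    then show "\<exists>M. \<forall>m\<ge>M. \<forall>n\<ge>M. norm (z m - z n) < e" by blast
  qed
  then obtain p where zp: "z \<longlonglongrightarrow> p"
    using Cauchy_convergent[OF \<open>Cauchy z\<close>] unfolding convergent_def by blast
  have pD: "p \<in> D" using closed_sequentially[OF D(1) zD zp] .
  have "norm (p - S p) \<le> 0"
  proof (rule LIMSEQ_le_const)
    have "(\<lambda>n. 2 * norm (z n - p) + \<epsilon> n * norm (z n - u)) \<longlonglongrightarrow> 2 * norm (p - p) + 0 * norm (p - u)"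
      unfolding \<epsilon>_def by (intro tendsto_intros zp LIMSEQ_inverse_real_of_nat)
    then show "(\<lambda>n. 2 * norm (z n - p) + \<epsilon> n * norm (z n - u)) \<longlonglongrightarrow> 0" by simp
    show "\<exists>N. \<forall>n\<ge>N. norm (p - S p) \<le> 2 * norm (z n - p) + \<epsilon> n * norm (z n - u)"
    proof (intro exI allI impI)
      fix n
      have "norm (p - S p) = norm ((p - z n) + (z n - S (z n)) + (S (z n) - S p))"
        by (rule arg_cong[where f=norm]) simp
      then have "norm (p - S p) \<le> norm (p - z n) + norm (z n - S (z n)) + norm (S (z n) - S p)"
        using norm_triangle_ineq[of "(p - z n) + (z n - S (z n))" "S (z n) - S p"]
          norm_triangle_ineq[of "p - z n" "z n - S (z n)"] by linarith
      also have "\<dots> \<le> norm (z n - p) + \<epsilon> n * norm (z n - u) + norm (z n - p)"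
      proof -
        have "norm (z n - S (z n)) = \<epsilon> n * norm (z n - u)" using zeq[of n] \<epsilon>pos[of n] by simp
        moreover have "norm (S (z n) - S p) \<le> norm (z n - p)" using ne[OF zD[of n] pD] .
        moreover have "norm (p - z n) = norm (z n - p)" by (rule norm_minus_commute)
        ultimately show ?thesis by linarith
      qed
      finally show "norm (p - S p) \<le> 2 * norm (z n - p) + \<epsilon> n * norm (z n - u)" by simp
    qed
  qed
  then have Sp: "S p = p" by simp
  have pin: "inner (p - u) (p - q) \<le> 0" if "q \<in> D" "S q = q" for q
  proof (rule LIMSEQ_le_const2)
    show "(\<lambda>n. inner (z n - u) (z n - q)) \<longlonglongrightarrow> inner (p - u) (p - q)"
      by (intro tendsto_intros zp)
    show "\<exists>N. \<forall>n\<ge>N. inner (z n - u) (z n - q) \<le> 0" using zq[OF that] by blast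
  qed
  have "\<exists>e>0. \<exists>z\<in>D. z - S z = - e *\<^sub>R (z - u) \<and> norm (z - p) < \<delta>" if dpos: "\<delta> > 0" for \<delta>
  proof -
    obtain n where "norm (z n - p) < \<delta>" using LIMSEQ_D[OF zp dpos] by blast
    then show ?thesis using zD[of n] zeq[of n] \<epsilon>pos[of n] by blast
  qed
  then show ?thesis using pD Sp pin by blast
qed


lemma halpern:
  fixes D :: "'a::{real_inner,complete_space} set" and S :: "'a \<Rightarrow> 'a" and x :: "nat \<Rightarrow> 'a"
  assumes D: "closed D" "convex D" and SD: "S ` D \<subseteq> D"
    and ne: "\<And>a b. a \<in> D \<Longrightarrow> b \<in> D \<Longrightarrow> norm (S a - S b) \<le> norm (a - b)"
    and q0: "q0 \<in> D" "S q0 = q0" and lam: "steering_sequence lam"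
    and u: "u \<in> D" and x0: "x 0 \<in> D"
    and xrec: "\<And>k. x (Suc k) = lam k *\<^sub>R u + (1 - lam k) *\<^sub>R S (x k)"
  shows "x \<longlonglongrightarrow> metric_proj {y\<in>D. S y = y} u"
proof -
  obtain p where pD: "p \<in> D" and Sp: "S p = p"
    and pin: "\<forall>q\<in>D. S q = q \<longrightarrow> inner (p - u) (p - q) \<le> 0"
    and papp: "\<forall>\<delta>>0. \<exists>e>0. \<exists>z\<in>D. z - S z = - e *\<^sub>R (z - u) \<and> norm (z - p) < \<delta>"
    using tikh_path[OF D SD ne u q0] by blast
  have proj: "metric_proj {y\<in>D. S y = y} u = p"
    by (rule proj_char) (use pD Sp pin in auto)
  from lam have l01: "\<And>k. 0 \<le> lam k \<and> lam k \<le> 1" and l0: "lam \<longlonglongrightarrow> 0"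
    and lns: "\<not> summable lam" and ldiff: "summable (\<lambda>k. \<bar>lam (Suc k) - lam k\<bar>)"
    by (auto simp: steering_sequence_def)
  have xD: "x k \<in> D" for k
  proof (induction k)
    case 0 then show ?case using x0 .
  next
    case (Suc k)
    then have "S (x k) \<in> D" using SD by blast
    then show ?case unfolding xrec using convexD[OF D(2) u, of "S (x k)" "lam k" "1 - lam k"] l01[of k]
      by simp
  qed
  define R where "R = max (norm (u - p)) (norm (x 0 - p))"
  have xb: "norm (x k - p) \<le> R" for k
  proof (induction k)
    case 0 then show ?case by (simp add: R_def)
  next
    case (Suc k)
    have "x (Suc k) - p = lam k *\<^sub>R (u - p) + (1 - lam k) *\<^sub>R (S (x k) - p)"
      by (simp add: xrec algebra_simps)
    then have "norm (x (Suc k) - p) \<le> norm (lam k *\<^sub>R (u - p)) + norm ((1 - lam k) *\<^sub>R (S (x k) - p))"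
      by (metis norm_triangle_ineq)
    also have "\<dots> = lam k * norm (u - p) + (1 - lam k) * norm (S (x k) - p)"
      using l01[of k] by simp
    also have "\<dots> \<le> lam k * R + (1 - lam k) * R"
    proof -
      have "norm (S (x k) - p) \<le> R" using ne[OF xD pD, of k] Sp Suc by simp
      then have "(1 - lam k) * norm (S (x k) - p) \<le> (1 - lam k) * R"
        using l01[of k] by (intro mult_left_mono) auto
      moreover have "lam k * norm (u - p) \<le> lam k * R"
        using l01[of k] by (intro mult_left_mono) (auto simp: R_def)
      ultimately show ?thesis by linarith
    qed
    also have "\<dots> = R" by (simp add: algebra_simps)
    finally show ?case .
  qed
  define M where "M = 2 * R"
  have SxM: "norm (u - S (x k)) \<le> M" for k
  proof -
    have "norm (u - S (x k)) \<le> norm (u - p) + norm (S (x k) - p)"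
      using norm_triangle_ineq[of "u - p" "p - S (x k)"] by (simp add: norm_minus_commute)
    moreover have "norm (S (x k) - p) \<le> R" using ne[OF xD pD, of k] Sp xb[of k] by simp
    moreover have "norm (u - p) \<le> R" by (simp add: R_def)
    ultimately show ?thesis by (simp add: M_def)
  qed
  define a where "a k = norm (x (Suc k) - x k)" for k
  have a0: "a \<longlonglongrightarrow> 0"
  proof (rule xu_lemma[where \<gamma> = "\<lambda>k. lam (Suc k)" and b = "\<lambda>_. 0"
        and c = "\<lambda>k. M * \<bar>lam (Suc k) - lam k\<bar>"])
    show "\<And>n. 0 \<le> a n" by (simp add: a_def)
    show "\<And>n. 0 \<le> lam (Suc n) \<and> lam (Suc n) \<le> 1" using l01 by blast
    show "\<not> summable (\<lambda>n. lam (Suc n))" using lns by (simp add: summable_Suc_iff)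
    have "0 \<le> M" using xb[of 0] by (simp add: M_def) (meson norm_ge_zero order_trans)
    then show "\<And>n. 0 \<le> M * \<bar>lam (Suc n) - lam n\<bar>" by simp
    show "summable (\<lambda>n. M * \<bar>lam (Suc n) - lam n\<bar>)" using ldiff by (rule summable_mult)
    show "\<And>e. 0 < e \<Longrightarrow> eventually (\<lambda>n. (0::real) \<le> e) sequentially" by simp
    fix k
    have "x (Suc (Suc k)) - x (Suc k) =
        (lam (Suc k) *\<^sub>R u + (1 - lam (Suc k)) *\<^sub>R S (x (Suc k))) - (lam k *\<^sub>R u + (1 - lam k) *\<^sub>R S (x k))"
      by (rule arg_cong2[where f = minus, OF xrec xrec])
    also have "\<dots> = (lam (Suc k) - lam k) *\<^sub>R (u - S (x k)) + (1 - lam (Suc k)) *\<^sub>R (S (x (Suc k)) - S (x k))"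
      by (simp add: algebra_simps)
    finally have "a (Suc k) \<le> norm ((lam (Suc k) - lam k) *\<^sub>R (u - S (x k))) + norm ((1 - lam (Suc k)) *\<^sub>R (S (x (Suc k)) - S (x k)))"
      unfolding a_def by (metis norm_triangle_ineq)
    also have "\<dots> = \<bar>lam (Suc k) - lam k\<bar> * norm (u - S (x k)) + (1 - lam (Suc k)) * norm (S (x (Suc k)) - S (x k))"
      using l01[of "Suc k"] by simp
    also have "\<dots> \<le> \<bar>lam (Suc k) - lam k\<bar> * M + (1 - lam (Suc k)) * a k"
    proof -
      have "\<bar>lam (Suc k) - lam k\<bar> * norm (u - S (x k)) \<le> \<bar>lam (Suc k) - lam k\<bar> * M"
        using SxM[of k] by (intro mult_left_mono) auto
      moreover have "(1 - lam (Suc k)) * norm (S (x (Suc k)) - S (x k)) \<le> (1 - lam (Suc k)) * a k"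
        unfolding a_def using ne[OF xD xD, of "Suc k" k] l01[of "Suc k"] by (intro mult_left_mono) auto
      ultimately show ?thesis by linarith
    qed
    finally show "a (Suc k) \<le> (1 - lam (Suc k)) * a k + lam (Suc k) * 0 + M * \<bar>lam (Suc k) - lam k\<bar>"
      by (simp add: algebra_simps)
  qed
  have eS: "(\<lambda>k. norm (S (x k) - x k)) \<longlonglongrightarrow> 0"
  proof (rule real_tendsto_sandwich[where f = "\<lambda>_. 0" and h = "\<lambda>k. lam k * M + a k"])
    show "eventually (\<lambda>k. 0 \<le> norm (S (x k) - x k)) sequentially" by simp
    show "eventually (\<lambda>k. norm (S (x k) - x k) \<le> lam k * M + a k) sequentially"
    proof (rule always_eventually, rule allI)
      fix k
      have "S (x k) - x (Suc k) = lam k *\<^sub>R (S (x k) - u)"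
        by (simp add: xrec algebra_simps)
      then have n1: "norm (S (x k) - x (Suc k)) \<le> lam k * M"
        using SxM[of k] l01[of k] by (simp add: norm_minus_commute mult_left_mono)
      have "norm (S (x k) - x k) \<le> norm (S (x k) - x (Suc k)) + norm (x (Suc k) - x k)"
        using norm_triangle_ineq[of "S (x k) - x (Suc k)" "x (Suc k) - x k"] by simp
      then show "norm (S (x k) - x k) \<le> lam k * M + a k" using n1 by (simp add: a_def)
    qed
    show "(\<lambda>_. 0) \<longlonglongrightarrow> (0::real)" by simp
    have "(\<lambda>k. lam k * M + a k) \<longlonglongrightarrow> 0 * M + 0" by (intro tendsto_intros l0 a0)
    then show "(\<lambda>k. lam k * M + a k) \<longlonglongrightarrow> 0" by simp
  qed
  have ev: "eventually (\<lambda>k. inner (u - p) (x k - p) \<le> \<eta>) sequentially" if \<eta>: "\<eta> > 0" for \<eta>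
  proof -
    define \<delta> where "\<delta> = min 1 (\<eta> / (2 * (norm (u - p) + R + 1)))"
    have R0: "0 \<le> R" by (simp add: R_def le_max_iff_disj)
    have den: "0 < 2 * (norm (u - p) + R + 1)" using R0 by (smt (verit) norm_ge_zero)
    then have \<delta>: "\<delta> > 0" using \<eta> den unfolding \<delta>_def by (simp add: min_def)
    obtain e z where e: "e > 0" and zD: "z \<in> D" and zeq: "z - S z = - e *\<^sub>R (z - u)"
      and zp: "norm (z - p) < \<delta>" using papp \<delta> by blast
    have "\<delta> * (norm (u - p) + R + 1) \<le> \<eta> / 2"
    proof -
      have "\<delta> \<le> \<eta> / (2 * (norm (u - p) + R + 1))" by (simp add: \<delta>_def)
      then have "\<delta> * (norm (u - p) + R + 1) \<le> \<eta> / (2 * (norm (u - p) + R + 1)) * (norm (u - p) + R + 1)"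
        using R0 by (intro mult_right_mono) auto
      also have "\<dots> = \<eta> / 2" using den by (simp add: field_simps)
      finally show ?thesis .
    qed
    note \<delta>b = this
    have c1: "inner (u - p) (z - p) + inner (z - p) (x k - z) \<le> \<eta> / 2" for k
    proof -
      have "inner (u - p) (z - p) \<le> norm (u - p) * norm (z - p)" by (rule norm_cauchy_schwarz)
      also have "\<dots> \<le> norm (u - p) * \<delta>" using zp by (intro mult_left_mono) auto
      finally have 1: "inner (u - p) (z - p) \<le> norm (u - p) * \<delta>" .
      have "norm (x k - z) \<le> norm (x k - p) + norm (p - z)"
        using norm_triangle_ineq[of "x k - p" "p - z"] by simp
      also have "\<dots> \<le> R + 1" using xb[of k] zp \<delta> by (simp add: norm_minus_commute \<delta>_def)
      finally have xz: "norm (x k - z) \<le> R + 1" .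
      have "inner (z - p) (x k - z) \<le> norm (z - p) * norm (x k - z)" by (rule norm_cauchy_schwarz)
      also have "\<dots> \<le> \<delta> * (R + 1)" using zp xz \<delta> by (intro mult_mono) auto
      finally have 2: "inner (z - p) (x k - z) \<le> \<delta> * (R + 1)" .
      have "norm (u - p) * \<delta> + \<delta> * (R + 1) = \<delta> * (norm (u - p) + R + 1)" by (simp add: algebra_simps)
      then show ?thesis using 1 2 \<delta>b by linarith
    qed
    have c2: "e * inner (u - z) (x k - z) \<le> norm (S (x k) - x k) * (R + 1)" for k
    proof -
      have "0 \<le> inner ((z - S z) - (x k - S (x k))) (z - x k)"
        by (rule ne_mono[of S, OF ne[OF zD xD]])
      also have "\<dots> = - e * inner (u - z) (x k - z) + inner (S (x k) - x k) (z - x k)"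
      proof -
        have "inner ((z - S z) - (x k - S (x k))) (z - x k) = inner (z - S z) (z - x k) - inner (x k - S (x k)) (z - x k)"
          by (rule inner_diff_left)
        moreover have "inner (z - S z) (z - x k) = - e * inner (u - z) (x k - z)"
          unfolding zeq by (simp add: inner_diff_left inner_diff_right algebra_simps)
        moreover have "- inner (x k - S (x k)) (z - x k) = inner (S (x k) - x k) (z - x k)"
          by (metis inner_minus_left minus_diff_eq)
        ultimately show ?thesis by linarith
      qed
      finally have "e * inner (u - z) (x k - z) \<le> inner (S (x k) - x k) (z - x k)" by simp
      also have "\<dots> \<le> norm (S (x k) - x k) * norm (z - x k)"
        by (rule norm_cauchy_schwarz)
      also have "\<dots> \<le> norm (S (x k) - x k) * (R + 1)"
      proof -
        have "norm (z - x k) \<le> norm (z - p) + norm (p - x k)"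
          using norm_triangle_ineq[of "z - p" "p - x k"] by simp
        also have "\<dots> \<le> R + 1" using xb[of k] zp \<delta> by (simp add: norm_minus_commute \<delta>_def)
        finally show ?thesis by (simp add: norm_minus_commute mult_left_mono)
      qed
      finally show ?thesis .
    qed
    have "eventually (\<lambda>k. norm (S (x k) - x k) < e * \<eta> / (2 * (R + 1))) sequentially"
      using eS e \<eta> R0 by (intro order_tendstoD(2)) auto
    then show ?thesis
    proof (rule eventually_mono)
      fix k assume k: "norm (S (x k) - x k) < e * \<eta> / (2 * (R + 1))"
      then have "norm (S (x k) - x k) * (R + 1) < e * \<eta> / 2"
        using R0 by (simp add: field_simps)
      with c2[of k] have "e * inner (u - z) (x k - z) < e * (\<eta> / 2)" by simp
      then have "inner (u - z) (x k - z) < \<eta> / 2" using e by simp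
      moreover have "inner (u - p) (x k - p) = inner (u - z) (x k - z) + (inner (u - p) (z - p) + inner (z - p) (x k - z))"
        by (simp add: inner_diff inner_commute algebra_simps)
      ultimately show "inner (u - p) (x k - p) \<le> \<eta>" using c1[of k] by linarith
    qed
  qed
  have sq: "(\<lambda>k. (norm (x k - p))\<^sup>2) \<longlonglongrightarrow> 0"
  proof (rule xu_lemma[where \<gamma> = lam and b = "\<lambda>k. 2 * inner (u - p) (x (Suc k) - p)" and c = "\<lambda>_. 0"])
    show "\<And>n. 0 \<le> (norm (x n - p))\<^sup>2" by simp
    show "\<And>n. 0 \<le> lam n \<and> lam n \<le> 1" by (rule l01)
    show "\<not> summable lam" by (rule lns)
    show "\<And>n. (0::real) \<le> 0" by simp
    show "summable (\<lambda>_. 0::real)" by simp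
    show "eventually (\<lambda>n. 2 * inner (u - p) (x (Suc n) - p) \<le> e) sequentially" if epos: "e > 0" for e
    proof -
      obtain N where N: "\<And>k. k \<ge> N \<Longrightarrow> inner (u - p) (x k - p) \<le> e / 2"
        using ev[of "e/2"] epos by (auto simp: eventually_sequentially)
      show ?thesis unfolding eventually_sequentially
      proof (intro exI[of _ N] allI impI)
        fix n assume "N \<le> n"
        then have "N \<le> Suc n" by simp
        from N[OF this] show "2 * inner (u - p) (x (Suc n) - p) \<le> e" by simp
      qed
    qed
    fix k
    define A where "A = (1 - lam k) *\<^sub>R (S (x k) - p)"
    define B where "B = lam k *\<^sub>R (u - p)"
    have xAB: "x (Suc k) - p = A + B" by (simp add: xrec A_def B_def algebra_simps)
    have "(norm (A + B))\<^sup>2 = (norm A)\<^sup>2 + 2 * inner A B + (norm B)\<^sup>2" by (rule sq_add)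
    moreover have "inner B (A + B) = inner A B + (norm B)\<^sup>2"
      by (simp add: inner_add power2_norm_eq_inner inner_commute)
    ultimately have "(norm (A + B))\<^sup>2 \<le> (norm A)\<^sup>2 + 2 * inner B (A + B)"
      using zero_le_power2[of "norm B"] by linarith
    moreover have "(norm A)\<^sup>2 \<le> (1 - lam k) * (norm (x k - p))\<^sup>2"
    proof -
      have "(norm A)\<^sup>2 = (1 - lam k)\<^sup>2 * (norm (S (x k) - p))\<^sup>2"
        using l01[of k] by (simp add: A_def power_mult_distrib)
      also have "\<dots> \<le> (1 - lam k)\<^sup>2 * (norm (x k - p))\<^sup>2"
        using ne[OF xD pD, of k] Sp by (intro mult_left_mono power_mono) auto
      also have "\<dots> \<le> (1 - lam k) * (norm (x k - p))\<^sup>2"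
      proof -
        have "(1 - lam k)\<^sup>2 \<le> 1 - lam k" using l01[of k] by (simp add: power2_eq_square mult_left_le_one_le)
        then show ?thesis by (intro mult_right_mono) auto
      qed
      finally show ?thesis .
    qed
    moreover have "2 * inner B (A + B) = lam k * (2 * inner (u - p) (x (Suc k) - p))"
      unfolding xAB[symmetric] by (simp add: B_def)
    ultimately show "(norm (x (Suc k) - p))\<^sup>2 \<le> (1 - lam k) * (norm (x k - p))\<^sup>2
        + lam k * (2 * inner (u - p) (x (Suc k) - p)) + 0"
      unfolding xAB by linarith
  qed
  have "(\<lambda>k. sqrt ((norm (x k - p))\<^sup>2)) \<longlonglongrightarrow> sqrt 0"
    by (intro tendsto_intros sq)
  then have "(\<lambda>k. norm (x k - p)) \<longlonglongrightarrow> 0" by simp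
  then have "(\<lambda>k. x k - p) \<longlonglongrightarrow> 0" by (simp add: tendsto_norm_zero_iff)
  then have "x \<longlonglongrightarrow> p" by (simp add: LIM_zero_iff)
  then show ?thesis using proj by simp
qed


lemma fne_ne:
  assumes "firmly_nonexpansive_on D T" "x \<in> D" "y \<in> D"
  shows "norm (T x - T y) \<le> norm (x - y)"
proof -
  have "(norm (T x - T y))\<^sup>2 \<le> inner (x - y) (T x - T y)"
    using assms unfolding firmly_nonexpansive_on_def by blast
  also have "\<dots> \<le> norm (x - y) * norm (T x - T y)" by (rule norm_cauchy_schwarz)
  finally have "norm (T x - T y) * norm (T x - T y) \<le> norm (x - y) * norm (T x - T y)"
    by (simp add: power2_eq_square)
  then show ?thesis
    by (cases "norm (T x - T y) = 0") (auto simp: mult_le_cancel_right)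
qed

lemma fne_sq:
  assumes "firmly_nonexpansive_on D T" "x \<in> D" "q \<in> D" "T q = q"
  shows "(norm (x - T x))\<^sup>2 + (norm (T x - q))\<^sup>2 \<le> (norm (x - q))\<^sup>2"
proof -
  have f: "(norm (T x - q))\<^sup>2 \<le> inner (x - q) (T x - q)"
    using assms unfolding firmly_nonexpansive_on_def by force
  have "x - q = (x - T x) + (T x - q)" by simp
  then have e: "(norm (x - q))\<^sup>2 = (norm (x - T x))\<^sup>2 + 2 * inner (x - T x) (T x - q) + (norm (T x - q))\<^sup>2"
    using sq_add by metis
  have "inner (x - T x) (T x - q) = inner (x - q) (T x - q) - (norm (T x - q))\<^sup>2"
  proof -
    have "x - T x = (x - q) - (T x - q)" by simp
    then show ?thesis by (simp add: inner_diff_left power2_norm_eq_inner)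
  qed
  with e f show ?thesis by linarith
qed

lemma str_fixpt: "(\<forall>i\<in>set t. T i q = q) \<Longrightarrow> string_op T t q = q"
  unfolding string_op_def by (induction t) auto

context
  fixes D :: "'a::real_inner set" and T :: "nat \<Rightarrow> 'a \<Rightarrow> 'a" and m :: nat
  assumes TD: "\<And>i. i \<in> {1..m} \<Longrightarrow> T i ` D \<subseteq> D"
    and Tf: "\<And>i. i \<in> {1..m} \<Longrightarrow> firmly_nonexpansive_on D (T i)"
begin

lemma str_D: "set t \<subseteq> {1..m} \<Longrightarrow> x \<in> D \<Longrightarrow> string_op T t x \<in> D"
  unfolding string_op_def
proof (induction t arbitrary: x)
  case Nil then show ?case by simp
next
  case (Cons i t)
  then have "T i x \<in> D" using TD[of i] by auto
  with Cons show ?case by simp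
qed

lemma str_ne: "set t \<subseteq> {1..m} \<Longrightarrow> x \<in> D \<Longrightarrow> y \<in> D \<Longrightarrow>
    norm (string_op T t x - string_op T t y) \<le> norm (x - y)"
  unfolding string_op_def
proof (induction t arbitrary: x y)
  case Nil then show ?case by simp
next
  case (Cons i t)
  then have i: "i \<in> {1..m}" and "T i x \<in> D" "T i y \<in> D" using TD[of i] by auto
  then have "norm (fold T t (T i x) - fold T t (T i y)) \<le> norm (T i x - T i y)"
    using Cons by simp
  also have "\<dots> \<le> norm (x - y)" using fne_ne[OF Tf[OF i]] Cons by simp
  finally show ?case by simp
qed

lemma str_fix:
  assumes "set t \<subseteq> {1..m}" "x \<in> D" "q \<in> D" "\<forall>i\<in>{1..m}. T i q = q"
  shows "norm (string_op T t x - q) \<le> norm (x - q) \<and>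
    (norm (string_op T t x - q) = norm (x - q) \<longrightarrow> (\<forall>i\<in>set t. T i x = x))"
  using assms unfolding string_op_def
proof (induction t arbitrary: x)
  case Nil then show ?case by simp
next
  case (Cons i t)
  then have i: "i \<in> {1..m}" and xi: "T i x \<in> D" using TD[of i] by auto
  have sq: "(norm (x - T i x))\<^sup>2 + (norm (T i x - q))\<^sup>2 \<le> (norm (x - q))\<^sup>2"
    using fne_sq[OF Tf[OF i] Cons(3) Cons(4)] Cons(5) i by blast
  then have "(norm (T i x - q))\<^sup>2 \<le> (norm (x - q))\<^sup>2" by (smt (verit) zero_le_power2)
  then have le1: "norm (T i x - q) \<le> norm (x - q)" using power2_le_imp_le by fastforce
  have IH: "norm (fold T t (T i x) - q) \<le> norm (T i x - q)"
    using Cons(1)[OF _ xi Cons(4) Cons(5)] Cons(2) by simp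
  show ?case
  proof (intro conjI impI)
    show "norm (fold T (i # t) x - q) \<le> norm (x - q)" using IH le1 by simp
    assume eq: "norm (fold T (i # t) x - q) = norm (x - q)"
    then have e1: "norm (T i x - q) = norm (x - q)" using IH le1 by simp
    with sq have "(norm (x - T i x))\<^sup>2 \<le> 0" by simp
    then have Tix: "T i x = x" by simp
    then have "norm (fold T t x - q) = norm (x - q)" using eq by simp
    then have "\<forall>j\<in>set t. T j x = x"
      using Cons(1)[OF _ Cons(3) Cons(4) Cons(5)] Cons(2) by simp
    with Tix show "\<forall>j\<in>set (i # t). T j x = x" by simp
  qed
qed

end


theorem theorem2:
  fixes D :: "'a::{real_inner, complete_space} set"
    and T :: "nat \<Rightarrow> 'a \<Rightarrow> 'a"
    and m :: nat
    and \<Omega> :: "nat list set" and w :: "nat list \<Rightarrow> real"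
    and lam :: "nat \<Rightarrow> real"
    and u x0 :: 'a and x :: "nat \<Rightarrow> 'a"
  assumes "D \<noteq> {}" and "closed D" and "convex D"
    and "m \<ge> 1"
    and "\<And>i. i \<in> {1..m} \<Longrightarrow> T i ` D \<subseteq> D"
    and "\<And>i. i \<in> {1..m} \<Longrightarrow> firmly_nonexpansive_on D (T i)"
    and "(\<Inter>i\<in>{1..m}. Fix_on D (T i)) \<noteq> {}"
    and "in_M m \<Omega> w"
    and "steering_sequence lam"
    and "u \<in> D" and "x0 \<in> D"
    and "x 0 = x0"
    and "\<And>k. x (Suc k) = lam k *\<^sub>R u + (1 - lam k) *\<^sub>R (\<Sum>t\<in>\<Omega>. w t *\<^sub>R string_op T t (x k))"
  shows "x \<longlonglongrightarrow> metric_proj (\<Inter>i\<in>{1..m}. Fix_on D (T i)) u"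
proof -
  note TD = assms(5) and Tf = assms(6)
  define S where "S y = (\<Sum>t\<in>\<Omega>. w t *\<^sub>R string_op T t y)" for y
  have fin: "finite \<Omega>" and iv: "\<And>t. t \<in> \<Omega> \<Longrightarrow> set t \<subseteq> {1..m}"
    and cov: "\<And>i. i \<in> {1..m} \<Longrightarrow> \<exists>t\<in>\<Omega>. i \<in> set t"
    and wpos: "\<And>t. t \<in> \<Omega> \<Longrightarrow> 0 < w t" and wsum: "(\<Sum>t\<in>\<Omega>. w t) = 1"
    using assms(8) unfolding in_M_def fit_def index_vector_def by auto
  define F where "F = (\<Inter>i\<in>{1..m}. Fix_on D (T i))"
  have F: "F = {y\<in>D. \<forall>i\<in>{1..m}. T i y = y}"
    using assms(4) unfolding F_def Fix_on_def by auto
  have SD: "S ` D \<subseteq> D"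
  proof
    fix y assume "y \<in> S ` D"
    then obtain z where z: "z \<in> D" "y = S z" by blast
    show "y \<in> D" unfolding z S_def
      by (rule convex_sum[OF fin assms(3) wsum]) (use wpos str_D[OF TD Tf iv z(1)] in \<open>auto simp: less_imp_le\<close>)
  qed
  have ne: "norm (S a - S b) \<le> norm (a - b)" if "a \<in> D" "b \<in> D" for a b
  proof -
    have eq: "S a - S b = (\<Sum>t\<in>\<Omega>. w t *\<^sub>R (string_op T t a - string_op T t b))"
      by (simp add: S_def sum_subtractf scaleR_diff_right)
    have "norm (S a - S b) \<le> (\<Sum>t\<in>\<Omega>. norm (w t *\<^sub>R (string_op T t a - string_op T t b)))"
      unfolding eq by (rule norm_sum)
    also have "\<dots> \<le> (\<Sum>t\<in>\<Omega>. w t * norm (a - b))"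
    proof (rule sum_mono)
      fix t assume t: "t \<in> \<Omega>"
      have "norm (string_op T t a - string_op T t b) \<le> norm (a - b)"
        by (rule str_ne[OF TD Tf iv[OF t] that])
      then show "norm (w t *\<^sub>R (string_op T t a - string_op T t b)) \<le> w t * norm (a - b)"
        using wpos[OF t] by (simp add: mult_left_mono)
    qed
    also have "\<dots> = norm (a - b)" by (simp add: sum_distrib_right[symmetric] wsum)
    finally show ?thesis .
  qed
  obtain q0 where q0F: "q0 \<in> F" using assms(7) F_def by blast
  have q0: "q0 \<in> D" "\<forall>i\<in>{1..m}. T i q0 = q0" using q0F F by auto
  have fixS: "{y\<in>D. S y = y} = F"
  proof
    show "F \<subseteq> {y\<in>D. S y = y}"
    proof
      fix y assume "y \<in> F"
      then have y: "y \<in> D" "\<forall>i\<in>{1..m}. T i y = y" using F by auto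
      have "S y = (\<Sum>t\<in>\<Omega>. w t *\<^sub>R y)"
        unfolding S_def
      proof (rule sum.cong[OF refl])
        fix t assume t: "t \<in> \<Omega>"
        have ty: "\<forall>i\<in>set t. T i y = y" using iv[OF t] y(2) by blast
        show "w t *\<^sub>R string_op T t y = w t *\<^sub>R y" using str_fixpt[of t T y, OF ty] by simp
      qed
      also have "\<dots> = y" by (simp add: scaleR_sum_left[symmetric] wsum)
      finally show "y \<in> {y\<in>D. S y = y}" using y by simp
    qed
    show "{y\<in>D. S y = y} \<subseteq> F"
    proof
      fix y assume "y \<in> {y\<in>D. S y = y}"
      then have yD: "y \<in> D" and Sy: "S y = y" by auto
      have sf: "\<And>t. t \<in> \<Omega> \<Longrightarrow> norm (string_op T t y - q0) \<le> norm (y - q0) \<and>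
          (norm (string_op T t y - q0) = norm (y - q0) \<longrightarrow> (\<forall>i\<in>set t. T i y = y))"
        using str_fix[OF TD Tf iv yD q0(1) q0(2)] by blast
      have "y - q0 = (\<Sum>t\<in>\<Omega>. w t *\<^sub>R (string_op T t y - q0))"
      proof -
        have "(\<Sum>t\<in>\<Omega>. w t *\<^sub>R (string_op T t y - q0)) = S y - (\<Sum>t\<in>\<Omega>. w t *\<^sub>R q0)"
          by (simp add: S_def sum_subtractf scaleR_diff_right)
        also have "\<dots> = y - q0" by (simp add: Sy scaleR_sum_left[symmetric] wsum)
        finally show ?thesis by simp
      qed
      then have "norm (y - q0) \<le> (\<Sum>t\<in>\<Omega>. norm (w t *\<^sub>R (string_op T t y - q0)))"
        by (simp only: norm_sum)
      also have "\<dots> = (\<Sum>t\<in>\<Omega>. w t * norm (string_op T t y - q0))"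
        using wpos by (intro sum.cong refl) (simp add: less_imp_le)
      finally have "0 \<le> (\<Sum>t\<in>\<Omega>. w t * norm (string_op T t y - q0)) - (\<Sum>t\<in>\<Omega>. w t * norm (y - q0))"
        by (simp add: sum_distrib_right[symmetric] wsum)
      then have le0: "(\<Sum>t\<in>\<Omega>. w t * (norm (y - q0) - norm (string_op T t y - q0))) \<le> 0"
        by (simp add: sum_subtractf right_diff_distrib)
      have nn: "\<And>t. t \<in> \<Omega> \<Longrightarrow> 0 \<le> w t * (norm (y - q0) - norm (string_op T t y - q0))"
        using sf wpos by (simp add: less_imp_le)
      have "(\<Sum>t\<in>\<Omega>. w t * (norm (y - q0) - norm (string_op T t y - q0))) = 0"
      proof -
        have "0 \<le> (\<Sum>t\<in>\<Omega>. w t * (norm (y - q0) - norm (string_op T t y - q0)))"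
          by (rule sum_nonneg) (rule nn)
        then show ?thesis using le0 by linarith
      qed
      then have z: "\<forall>t\<in>\<Omega>. w t * (norm (y - q0) - norm (string_op T t y - q0)) = 0"
        using sum_nonneg_eq_0_iff[of \<Omega> "\<lambda>t. w t * (norm (y - q0) - norm (string_op T t y - q0))", OF fin nn] by blast
      have "\<forall>i\<in>{1..m}. T i y = y"
      proof
        fix i assume "i \<in> {1..m}"
        then obtain t where t: "t \<in> \<Omega>" "i \<in> set t" using cov by blast
        have "w t * (norm (y - q0) - norm (string_op T t y - q0)) = 0" using z t(1) by blast
        then have "norm (string_op T t y - q0) = norm (y - q0)" using wpos[OF t(1)] by simp
        then show "T i y = y" using sf[OF t(1)] t(2) by blast
      qed
      then show "y \<in> F" using F yD by simp
    qed
  qed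
  have x0D: "x 0 \<in> D" using assms(11,12) by simp
  have "x \<longlonglongrightarrow> metric_proj {y\<in>D. S y = y} u"
  proof (rule halpern[of D S q0 lam u x, OF assms(2,3) SD ne q0(1) _ assms(9,10) x0D])
    show "S q0 = q0" using q0F fixS by blast
    show "\<And>k. x (Suc k) = lam k *\<^sub>R u + (1 - lam k) *\<^sub>R S (x k)"
      using assms(13) by (simp add: S_def)
  qed
  then show ?thesis using fixS by (simp add: F_def)
qed

end
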